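(* Let $n\ge2$ and let $G\subsetneq\mathbb{R}^n$ be a domain. Then for all $x,y\in G$, $$\frac{1}{\sqrt2}\,p_G(x,y)\le s_G(x,y)\le\sqrt2\,p_G(x,y),$$ and this inequality is sharp (the constants $1/\sqrt2$ and $\sqrt2$ cannot be improved over all such domains).
   Context: A domain is a non-empty, open, connected set; here it is a proper subset of $\mathbb{R}^n$. $d_G(x)=\inf\{|x-z|:z\in\partial G\}$, $s_G(x,y)=\frac{|x-y|}{\inf_{z\in\partial G}(|x-z|+|z-y|)}$, $p_G(x,y)=\frac{|x-y|}{\sqrt{|x-y|^2+4d_G(x)d_G(y)}}$. *)

theory Defs
  imports "HOL-Analysis.Analysis"
begin

definition proper_domain :: "'a::euclidean_space set \<Rightarrow> bool" where
  "proper_domain G \<longleftrightarrow> G \<noteq> {} \<and> open G \<and> connected G \<and> G \<noteq> UNIV"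

definition dG :: "'a::euclidean_space set \<Rightarrow> 'a \<Rightarrow> real" where
  "dG G x = Inf {dist x z | z. z \<in> frontier G}"

definition sG :: "'a::euclidean_space set \<Rightarrow> 'a \<Rightarrow> 'a \<Rightarrow> real" where
  "sG G x y = dist x y / Inf {dist x z + dist z y | z. z \<in> frontier G}"

definition pG :: "'a::euclidean_space set \<Rightarrow> 'a \<Rightarrow> 'a \<Rightarrow> real" where
  "pG G x y = dist x y / sqrt ((dist x y)\<^sup>2 + 4 * dG G x * dG G y)"

end

theory Submission
  imports Defs
begin

lemma main_ineq:
  fixes G :: "'a::euclidean_space set"
  assumes pd: "proper_domain G" and xG: "x \<in> G" and yG: "y \<in> G"
  shows "(1 / sqrt 2) * pG G x y \<le> sG G x y \<and> sG G x y \<le> sqrt 2 * pG G x y"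
proof -
  have F: "frontier G \<noteq> {}" using pd unfolding proper_domain_def
    using frontier_eq_empty by blast
  then obtain z0 where z0: "z0 \<in> frontier G" by blast
  define A where "A w = {dist w z | z. z \<in> frontier G}" for w
  define B where "B = {dist x z + dist z y | z. z \<in> frontier G}"
  have An: "A w \<noteq> {}" for w using F unfolding A_def by blast
  have Ab: "bdd_below (A w)" for w unfolding A_def bdd_below_def by (rule exI[of _ 0]) auto
  have Bn: "B \<noteq> {}" using F unfolding B_def by blast
  have Bb: "bdd_below B" unfolding B_def bdd_below_def by (rule exI[of _ 0]) auto
  have dG: "dG G w = Inf (A w)" for w unfolding dG_def A_def by simp
  define dx where "dx = dG G x"
  define dy where "dy = dG G y"
  define S where "S = Inf B"
  define t where "t = dist x y"
  have dxl: "dx \<le> dist x z" if "z \<in> frontier G" for z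
    unfolding dx_def dG by (rule cInf_lower) (use that Ab in \<open>auto simp: A_def\<close>)
  have dyl: "dy \<le> dist y z" if "z \<in> frontier G" for z
    unfolding dy_def dG by (rule cInf_lower) (use that Ab in \<open>auto simp: A_def\<close>)
  have dx0: "0 \<le> dx" unfolding dx_def dG by (rule cInf_greatest[OF An]) (auto simp: A_def)
  have dy0: "0 \<le> dy" unfolding dy_def dG by (rule cInf_greatest[OF An]) (auto simp: A_def)
  have Sl: "S \<le> dist x z + dist z y" if "z \<in> frontier G" for z
    unfolding S_def by (rule cInf_lower) (use that Bb in \<open>auto simp: B_def\<close>)
  have St: "t \<le> S" unfolding S_def t_def
    by (rule cInf_greatest[OF Bn]) (auto simp: B_def dist_triangle)
  have Sd: "dx + dy \<le> S" unfolding S_def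
  proof (rule cInf_greatest[OF Bn])
    fix r assume "r \<in> B"
    then obtain z where z: "z \<in> frontier G" "r = dist x z + dist z y" unfolding B_def by blast
    show "dx + dy \<le> r" using dxl[OF z(1)] dyl[OF z(1)] z(2) by (simp add: dist_commute)
  qed
  have Sx: "(S - t) / 2 \<le> dx"
    unfolding dx_def dG
  proof (rule cInf_greatest[OF An])
    fix r assume "r \<in> A x"
    then obtain z where z: "z \<in> frontier G" "r = dist x z" unfolding A_def by blast
    have "dist z y \<le> dist z x + dist x y" by (rule dist_triangle)
    then show "(S - t) / 2 \<le> r" using Sl[OF z(1)] z(2) unfolding t_def
      by (simp add: dist_commute)
  qed
  have Sy: "(S - t) / 2 \<le> dy"
    unfolding dy_def dG
  proof (rule cInf_greatest[OF An])
    fix r assume "r \<in> A y"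
    then obtain z where z: "z \<in> frontier G" "r = dist y z" unfolding A_def by blast
    have "dist x z \<le> dist x y + dist y z" by (rule dist_triangle)
    then show "(S - t) / 2 \<le> r" using Sl[OF z(1)] z(2) unfolding t_def
      by (simp add: dist_commute)
  qed
  have sG: "sG G x y = t / S" unfolding sG_def S_def B_def t_def by simp
  define Q where "Q = sqrt (t\<^sup>2 + 4 * dx * dy)"
  have pG: "pG G x y = t / Q" unfolding pG_def Q_def t_def dx_def dy_def by simp
  show ?thesis
  proof (cases "t = 0")
    case True then show ?thesis by (simp add: sG pG)
  next
    case False
    then have t0: "t > 0" unfolding t_def by simp
    have S0: "S > 0" using St t0 by linarith
    have QQ: "Q\<^sup>2 = t\<^sup>2 + 4 * dx * dy" unfolding Q_def using dx0 dy0 by simp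
    have Q0: "Q > 0" unfolding Q_def using t0 dx0 dy0 by (simp add: add_pos_nonneg)
    have key1: "S\<^sup>2 \<le> 2 * Q\<^sup>2"
    proof -
      define m where "m = min dx dy"
      have m0: "0 \<le> m" "m \<le> dx" "m \<le> dy" unfolding m_def using dx0 dy0 by auto
      have "S - t \<le> 2 * m" using Sx Sy unfolding m_def by simp
      hence "S \<le> t + 2 * m" by simp
      hence "S\<^sup>2 \<le> (t + 2 * m)\<^sup>2" using S0 by (simp add: power_mono)
      moreover have a: "0 \<le> (t - 2 * m)\<^sup>2" by simp
      moreover have b: "m * m \<le> dx * dy" by (rule mult_mono) (use m0 dx0 dy0 in auto)
      moreover have e1: "(t + 2 * m)\<^sup>2 = t * t + 4 * (t * m) + 4 * (m * m)"
        by (simp add: power2_eq_square algebra_simps)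
      moreover have e2: "(t - 2 * m)\<^sup>2 = t * t - 4 * (t * m) + 4 * (m * m)"
        by (simp add: power2_eq_square algebra_simps)
      moreover have e3: "t\<^sup>2 = t * t" by (simp add: power2_eq_square)
      moreover have e4: "4 * dx * dy = 4 * (dx * dy)" by simp
      ultimately show ?thesis using QQ by linarith
    qed
    have key2: "Q\<^sup>2 \<le> 2 * S\<^sup>2"
    proof -
      have "t\<^sup>2 \<le> S\<^sup>2" using St t0 by (simp add: power_mono)
      moreover have "(dx + dy)\<^sup>2 \<le> S\<^sup>2" using Sd dx0 dy0 by (simp add: power_mono)
      moreover have "4 * dx * dy \<le> (dx + dy)\<^sup>2"
      proof -
        have "0 \<le> (dx - dy)\<^sup>2" by simp
        moreover have "(dx - dy)\<^sup>2 = dx * dx - 2 * (dx * dy) + dy * dy"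
          by (simp add: power2_eq_square algebra_simps)
        moreover have "(dx + dy)\<^sup>2 = dx * dx + 2 * (dx * dy) + dy * dy"
          by (simp add: power2_eq_square algebra_simps)
        ultimately show ?thesis by linarith
      qed
      ultimately show ?thesis using QQ by linarith
    qed
    have s2: "sqrt 2 > 0" by simp
    have l1: "S \<le> sqrt 2 * Q"
    proof -
      have "S = sqrt (S\<^sup>2)" using S0 by simp
      also have "\<dots> \<le> sqrt (2 * Q\<^sup>2)" using key1 by (rule real_sqrt_le_mono)
      also have "\<dots> = sqrt 2 * Q" using Q0 by (simp add: real_sqrt_mult)
      finally show ?thesis .
    qed
    have l2: "Q \<le> sqrt 2 * S"
    proof -
      have "Q = sqrt (Q\<^sup>2)" using Q0 by simp
      also have "\<dots> \<le> sqrt (2 * S\<^sup>2)" using key2 by (rule real_sqrt_le_mono)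
      also have "\<dots> = sqrt 2 * S" using S0 by (simp add: real_sqrt_mult)
      finally show ?thesis .
    qed
    have g1: "(1 / sqrt 2) * (t / Q) \<le> t / S"
      using l1 S0 Q0 t0 s2 by (simp add: field_simps)
    have g2: "t / S \<le> sqrt 2 * (t / Q)"
      using l2 S0 Q0 t0 s2 by (simp add: field_simps)
    show ?thesis using g1 g2 by (simp add: sG pG)
  qed
qed


lemma Inf_min_eq:
  fixes f :: "'a \<Rightarrow> real"
  assumes "w \<in> X" "f w = m" "\<And>z. z \<in> X \<Longrightarrow> m \<le> f z"
  shows "Inf {f z | z. z \<in> X} = m"
  by (rule cInf_eq_minimum) (use assms in auto)

lemma sharp_low:
  fixes b :: "'a::euclidean_space"
  assumes b: "norm b = 1" and c: "c > 1 / sqrt 2"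
  shows "\<exists>(G::'a set) x y. proper_domain G \<and> x \<in> G \<and> y \<in> G \<and>
            \<not> (c * pG G x y \<le> sG G x y)"
proof -
  define a where "a = (1/2) *\<^sub>R b"
  have na: "norm a = 1/2" unfolding a_def using b by simp
  have pd: "proper_domain (ball (0::'a) 1)" unfolding proper_domain_def
  proof (intro conjI)
    have "b \<notin> ball (0::'a) 1" using b by simp
    thus "ball (0::'a) 1 \<noteq> UNIV" by blast
  qed auto
  have fr: "frontier (ball (0::'a) 1) = sphere 0 1" by simp
  have xin: "- a \<in> ball 0 1" "a \<in> ball 0 1" using na by auto
  have dx: "dG (ball 0 1) (- a) = 1/2" unfolding dG_def fr
  proof (rule Inf_min_eq[where w="- b"])
    show "- b \<in> sphere 0 1" using b by simp
    have "- a - - b = (1/2) *\<^sub>R b" unfolding a_def by (simp add: scaleR_2 algebra_simps flip: scaleR_add_left scaleR_diff_left)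
    thus "dist (- a) (- b) = 1/2" unfolding dist_norm using b by simp
    fix z :: 'a assume "z \<in> sphere 0 1"
    hence nz: "norm z = 1" by simp
    have "norm z \<le> norm (z + a) + norm a" by (metis add_diff_cancel_right' norm_triangle_ineq4)
    thus "1/2 \<le> dist (- a) z" using nz na by (simp add: dist_norm norm_minus_commute add.commute)
  qed
  have dy: "dG (ball 0 1) a = 1/2" unfolding dG_def fr
  proof (rule Inf_min_eq[where w="b"])
    show "b \<in> sphere 0 1" using b by simp
    have "a - b = - ((1/2) *\<^sub>R b)" unfolding a_def by (simp add: scaleR_2 algebra_simps flip: scaleR_add_left scaleR_diff_left)
    thus "dist a b = 1/2" unfolding dist_norm using b by (simp only: norm_minus_cancel) simp
    fix z :: 'a assume "z \<in> sphere 0 1"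
    hence nz: "norm z = 1" by simp
    have "norm z \<le> norm (z - a) + norm a" by (metis diff_add_cancel norm_triangle_ineq)
    thus "1/2 \<le> dist a z" using nz na by (simp add: dist_norm norm_minus_commute)
  qed
  have S: "Inf {dist (- a) z + dist z a | z. z \<in> frontier (ball (0::'a) 1)} = 2" unfolding fr
  proof (rule Inf_min_eq[where w="b"])
    show "b \<in> sphere 0 1" using b by simp
    have "(3/2) *\<^sub>R b = (1 + 1/2) *\<^sub>R b" by simp
    also have "\<dots> = b + a" unfolding a_def by (simp only: scaleR_add_left scaleR_one)
    finally have "b + a = (3/2) *\<^sub>R b" by simp
    hence e1: "norm (b + a) = 3/2" using b by simp
    have "b - a = (1/2) *\<^sub>R b" unfolding a_def by (simp add: scaleR_2 algebra_simps flip: scaleR_add_left scaleR_diff_left)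
    hence e2: "norm (b - a) = 1/2" using b by simp
    show "dist (- a) b + dist b a = 2" using e1 e2
      by (simp add: dist_norm norm_minus_commute add.commute)
    fix z :: 'a assume "z \<in> sphere 0 1"
    hence nz: "norm z = 1" by simp
    have "norm ((z + a) + (z - a)) \<le> norm (z + a) + norm (z - a)" by (rule norm_triangle_ineq)
    moreover have "(z + a) + (z - a) = 2 *\<^sub>R z" by (simp add: scaleR_2 algebra_simps flip: scaleR_add_left scaleR_diff_left)
    ultimately have "2 \<le> norm (z + a) + norm (z - a)" using nz by simp
    thus "2 \<le> dist (- a) z + dist z a"
      by (simp add: dist_norm norm_minus_commute add.commute)
  qed
  have "- a - a = - b" unfolding a_def by (simp add: scaleR_2 algebra_simps flip: scaleR_add_left scaleR_diff_left)
  hence t: "dist (- a) a = 1" unfolding dist_norm using b by simp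
  have sG: "sG (ball 0 1) (- a) a = 1/2" unfolding sG_def S t by simp
  have pG: "pG (ball 0 1) (- a) a = 1 / sqrt 2" unfolding pG_def dx dy t by simp
  have "\<not> (c * pG (ball 0 1) (- a) a \<le> sG (ball 0 1) (- a) a)"
  proof
    assume "c * pG (ball 0 1) (- a) a \<le> sG (ball 0 1) (- a) a"
    hence "c / sqrt 2 \<le> 1/2" unfolding sG pG by simp
    hence "c \<le> sqrt 2 / 2" by (simp add: field_simps)
    moreover have "sqrt 2 / 2 = 1 / sqrt 2" by (simp add: field_simps)
    ultimately show False using c by simp
  qed
  thus ?thesis using pd xin by blast
qed

lemma sharp_up:
  fixes b :: "'a::euclidean_space"
  assumes b: "norm b = 1" and c: "c < sqrt 2" and D: "DIM('a) \<ge> 2"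
  shows "\<exists>(G::'a set) x y. proper_domain G \<and> x \<in> G \<and> y \<in> G \<and>
            \<not> (sG G x y \<le> c * pG G x y)"
proof -
  have pd: "proper_domain (- {0::'a})" unfolding proper_domain_def
    using connected_punctured_universe[OF D] by auto
  have fr: "frontier (- {0::'a}) = {0}" by (metis frontier_complement frontier_def closure_insert closure_empty interior_singleton Diff_empty)
  have xin: "b \<in> - {0}" "- b \<in> - {0}" using b by auto
  have dx: "dG (- {0}) b = 1" unfolding dG_def fr using b by simp
  have dy: "dG (- {0}) (- b) = 1" unfolding dG_def fr using b by simp
  have "b - - b = 2 *\<^sub>R b" by (simp add: scaleR_2 algebra_simps flip: scaleR_add_left scaleR_diff_left)
  hence t: "dist b (- b) = 2" unfolding dist_norm using b by simp
  have S: "Inf {dist b z + dist z (- b) | z. z \<in> frontier (- {0::'a})} = 2"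
    unfolding fr using b by simp
  have sG: "sG (- {0}) b (- b) = 1" unfolding sG_def S t by simp
  have s8: "sqrt 8 = 2 * sqrt 2"
  proof -
    have "sqrt 8 = sqrt (2\<^sup>2 * 2)" by simp
    also have "\<dots> = 2 * sqrt 2" by (simp only: real_sqrt_mult) simp
    finally show ?thesis .
  qed
  have pG: "pG (- {0}) b (- b) = 1 / sqrt 2" unfolding pG_def dx dy t by (simp add: s8)
  have "\<not> (sG (- {0}) b (- b) \<le> c * pG (- {0}) b (- b))"
  proof
    assume "sG (- {0}) b (- b) \<le> c * pG (- {0}) b (- b)"
    hence "1 \<le> c / sqrt 2" unfolding sG pG by simp
    hence "sqrt 2 \<le> c" by (simp add: field_simps)
    thus False using c by simp
  qed
  thus ?thesis using pd xin by blast
qed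

theorem theorem3p5:
  assumes "DIM('a::euclidean_space) \<ge> 2"
  shows "(\<forall>(G::'a set) x y. proper_domain G \<longrightarrow> x \<in> G \<longrightarrow> y \<in> G \<longrightarrow>
            (1 / sqrt 2) * pG G x y \<le> sG G x y \<and> sG G x y \<le> sqrt 2 * pG G x y)
       \<and> (\<forall>c > 1 / sqrt 2. \<exists>(G::'a set) x y. proper_domain G \<and> x \<in> G \<and> y \<in> G \<and>
            \<not> (c * pG G x y \<le> sG G x y))
       \<and> (\<forall>c < sqrt 2. \<exists>(G::'a set) x y. proper_domain G \<and> x \<in> G \<and> y \<in> G \<and>
            \<not> (sG G x y \<le> c * pG G x y))"
proof -
  obtain b :: 'a where "b \<in> Basis" using nonempty_Basis by blast
  hence nb: "norm b = 1" by simp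
  show ?thesis using main_ineq sharp_low[OF nb] sharp_up[OF nb _ assms] by blast
qed

end
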